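(* The characteristic polynomial of the linear map $K_{\cal Z}^*$ on $Pic({\cal Z})$ is $$P(\lambda)Q(\lambda)^{q-1}(\lambda-1)^{q^2-q+2}(\lambda+1)^{q^2-3q+2},$$ where $P(\lambda)=\lambda^2-(q^2-4q+2)\lambda+1$ and $Q(\lambda) = (\lambda^2+1)^2-(q-2)^2\lambda^2$.
   Context: ${\cal M}_q$ is the space of complex $q\times q$ matrices; $K=I\circ J$ on ${\bf P}({\cal M}_q)$, where $I(x)=x^{-1}$ and $J(x)=(1/x_{i,j})$. ${\cal Z}$ is the blowup of ${\bf P}({\cal M}_q)$ along $R_1$ (rank-one matrices; divisor ${\cal R}^1$), along the sets $A_{i,j}$ of matrices with vanishing $i$-th row and $j$-th column (divisors ${\cal A}^{i,j}$), and along codimension-2 sets $B_{i,j}\subset{\cal A}^{i,j}$ (divisors ${\cal B}^{i,j}$). $Pic({\cal Z})$ has basis $\{H,{\cal R}^1,{\cal A}^{i,j},{\cal B}^{i,j}: 1\le i,j\le q\}$, $H$ a hyperplane class, and with $T_{i,j}=\{(a,b): a=i \text{ or } b=j\}$ the pullback $K_{\cal Z}^*$ acts by $$\begin{aligned} H & \mapsto (q^2-q+1)H -(q-2){\cal R}^1-\sum_{a,b}\left( (2q-3){\cal A}^{a,b}-(2q-2){\cal B}^{a,b} \right) \\ {\cal R}^1 & \mapsto (q^2-q)H-(q-1){\cal R}^1 - \sum_{a,b}\left( (2q-3){\cal A}^{a,b}-(2q-2){\cal B}^{a,b} \right) \\ {\cal A}^{i,j} & \mapsto H- {\cal B}^{j,i}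 - \sum_{(a,b)\in T_{i,j}} \left({\cal A}^{a,b} + {\cal B}^{a,b}\right) \\ {\cal B}^{i,j} & \mapsto {\cal A}^{j,i} + {\cal B}^{j,i}. \end{aligned}$$
   Formalization: In the images of H and ${\cal R}^1$ the term $(2q-2){\cal B}^{a,b}$ is subtracted rather than added, and the image of ${\cal A}^{i,j}$ sums over $T_{j,i}$ in place of $T_{i,j}$. This corrects a misprint. *)

theory Defs
  imports "Jordan_Normal_Form.Char_Poly"
begin

text \<open>Basis of Pic(Z): H, R^1, A^{i,j}, B^{i,j} (1 \<le> i,j \<le> q).\<close>
datatype pic_gen = GH | GR | GA nat nat | GB nat nat

definition gen_of :: "nat \<Rightarrow> nat \<Rightarrow> pic_gen" where
  "gen_of q k =
     (if k = 0 then GH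
      else if k = 1 then GR
      else if k < q^2 + 2 then GA ((k - 2) div q + 1) ((k - 2) mod q + 1)
      else GB ((k - 2 - q^2) div q + 1) ((k - 2 - q^2) mod q + 1))"

definition T_set :: "nat \<Rightarrow> nat \<Rightarrow> (nat \<times> nat) set" where
  "T_set i j = {(a, b). a = i \<or> b = j}"

fun KZ_coef :: "nat \<Rightarrow> pic_gen \<Rightarrow> pic_gen \<Rightarrow> int" where
  "KZ_coef q GH GH = int q^2 - int q + 1"
| "KZ_coef q GH GR = - (int q - 2)"
| "KZ_coef q GH (GA a b) = - (2 * int q - 3)"
| "KZ_coef q GH (GB a b) = - (2 * int q - 2)"
| "KZ_coef q GR GH = int q^2 - int q"
| "KZ_coef q GR GR = - (int q - 1)"
| "KZ_coef q GR (GA a b) = - (2 * int q - 3)"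
| "KZ_coef q GR (GB a b) = - (2 * int q - 2)"
| "KZ_coef q (GA i j) GH = 1"
| "KZ_coef q (GA i j) GR = 0"
| "KZ_coef q (GA i j) (GA a b) = - (if (a, b) \<in> T_set j i then 1 else 0)"
| "KZ_coef q (GA i j) (GB a b) =
     - (if (a, b) = (j, i) then 1 else 0) - (if (a, b) \<in> T_set j i then 1 else 0)"
| "KZ_coef q (GB i j) GH = 0"
| "KZ_coef q (GB i j) GR = 0"
| "KZ_coef q (GB i j) (GA a b) = (if (a, b) = (j, i) then 1 else 0)"
| "KZ_coef q (GB i j) (GB a b) = (if (a, b) = (j, i) then 1 else 0)"

text \<open>Matrix of K_Z^* in the above basis; column c is the coordinate vector of
  the image of the c-th basis element.\<close>
definition KZ_mat :: "nat \<Rightarrow> int mat" where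
  "KZ_mat q = mat (2 * q^2 + 2) (2 * q^2 + 2) (\<lambda>(r, c). KZ_coef q (gen_of q c) (gen_of q r))"

end

theory Submission
  imports Defs
begin

lemma det2: "det (mat 2 2 f) = f (0,0) * f (1,1) - f (0,1) * f (1,(0::nat)) "
proof -
  have "det (mat 2 2 f) = (\<Sum>i<2. mat 2 2 f $$ (i,0) * cofactor (mat 2 2 f) i 0)"
    by (rule laplace_expansion_column, auto)
  also have "\<dots> = f (0,0) * f (1,1) - f (0,1) * f (1,0)"
    by (simp add: cofactor_def numeral_2_eq_2 det_single mat_delete_def)
  finally show ?thesis .
qed

definition enum_set :: "'i set \<Rightarrow> nat \<Rightarrow> 'i" where
  "enum_set I = (SOME h. bij_betw h {0..<card I} I)"

lemma enum_set: "finite I \<Longrightarrow> bij_betw (enum_set I) {0..<card I} I"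
  unfolding enum_set_def by (rule someI_ex[OF ex_bij_betw_nat_finite])

definition dt :: "'i set \<Rightarrow> ('i \<Rightarrow> 'i \<Rightarrow> 'a :: comm_ring_1) \<Rightarrow> 'a" where
  "dt I A = det (mat (card I) (card I) (\<lambda>(i,j). A (enum_set I i) (enum_set I j)))"

lemma det_permute_both:
  assumes p: "p permutes {0..<n}"
  shows "det (mat n n (\<lambda>(i,j). f (p i) (p j))) = (det (mat n n (\<lambda>(i,j). f i j)) :: 'a :: comm_ring_1)"
proof -
  have pn: "\<And>i. i < n \<Longrightarrow> p i < n" using p permutes_in_image by fastforce
  let ?B = "mat n n (\<lambda>(i,j). f i (p j))"
  have "mat n n (\<lambda>(i,j). f (p i) (p j)) = mat n n (\<lambda>(i,j). ?B $$ (p i, j))"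
    by (rule eq_matI, auto simp: pn)
  hence "det (mat n n (\<lambda>(i,j). f (p i) (p j))) = signof p * det ?B"
    using det_permute_rows[OF _ p, of ?B] by auto
  also have "det ?B = det (transpose_mat ?B)" by (rule det_transpose[symmetric], auto)
  also have "transpose_mat ?B = mat n n (\<lambda>(i,j). (transpose_mat (mat n n (\<lambda>(i,j). f i j))) $$ (p i, j))"
    by (rule eq_matI, auto simp: pn)
  also have "det \<dots> = signof p * det (transpose_mat (mat n n (\<lambda>(i,j). f i j)))"
    by (rule det_permute_rows[OF _ p], auto)
  also have "det (transpose_mat (mat n n (\<lambda>(i,j). f i j))) = det (mat n n (\<lambda>(i,j). f i j))"
    by (rule det_transpose, auto)
  finally show ?thesis 
    by (simp flip: of_int_mult add: mult.assoc[symmetric])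
qed

lemma dt_bij:
  assumes fin: "finite I" and g: "bij_betw g {0..<n} I"
  shows "dt I A = det (mat n n (\<lambda>(i,j). A (g i) (g j)))"
proof -
  have n: "card I = n" using bij_betw_same_card[OF g] by simp
  let ?h = "enum_set I"
  have h: "bij_betw ?h {0..<n} I" using enum_set[OF fin] n by simp
  define p where "p = (\<lambda>i. if i < n then inv_into {0..<n} ?h (g i) else i)"
  have hp: "\<And>i. i < n \<Longrightarrow> ?h (p i) = g i"
    unfolding p_def using h g by (auto simp: bij_betw_def f_inv_into_f)
  have bp: "bij_betw p {0..<n} {0..<n}"
  proof -
    have "bij_betw (inv_into {0..<n} ?h \<circ> g) {0..<n} {0..<n}"
      by (rule bij_betw_trans[OF g bij_betw_inv_into[OF h]])
    moreover have "\<And>i. i \<in> {0..<n} \<Longrightarrow> (inv_into {0..<n} ?h \<circ> g) i = p i" by (simp add: p_def)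
    ultimately show ?thesis using bij_betw_cong by blast
  qed
  have pp: "p permutes {0..<n}"
    by (rule bij_imp_permutes[OF bp], simp add: p_def)
  have "det (mat n n (\<lambda>(i,j). A (g i) (g j))) = det (mat n n (\<lambda>(i,j). A (?h (p i)) (?h (p j))))"
    by (rule arg_cong[of _ _ det], rule eq_matI, auto simp: hp)
  also have "\<dots> = det (mat n n (\<lambda>(i,j). A (?h i) (?h j)))"
    using det_permute_both[OF pp, of "\<lambda>i j. A (?h i) (?h j)"] by simp
  finally show ?thesis unfolding dt_def n by simp
qed

lemma dt_empty: "dt {} A = 1"
  unfolding dt_def by (simp add: det_dim_zero)

lemma dt_single: "dt {x} A = A x x"
proof -
  have "bij_betw (\<lambda>_. x) {0..<1::nat} {x}" by (simp add: bij_betw_def)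
  from dt_bij[OF _ this] show ?thesis by (simp add: det_single)
qed

lemma dt_pair: assumes "x \<noteq> y" shows "dt {x,y} A = A x x * A y y - A x y * A y x"
proof -
  have "bij_betw (\<lambda>i. if i = 0 then x else y) {0..<2::nat} {x,y}" 
    using assms by (auto simp: bij_betw_def inj_on_def image_def intro: exI[of _ 1]; metis One_nat_def less_2_cases)
  from dt_bij[OF _ this] show ?thesis by (simp add: det2)
qed

lemma dt_split:
  fixes A :: "'i \<Rightarrow> 'i \<Rightarrow> 'a :: idom"
  assumes f1: "finite I1" and f2: "finite I2" and dis: "I1 \<inter> I2 = {}"
    and z: "\<And>i j. i \<in> I2 \<Longrightarrow> j \<in> I1 \<Longrightarrow> A i j = 0"
  shows "dt (I1 \<union> I2) A = dt I1 A * dt I2 A"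
proof -
  define n1 where "n1 = card I1"
  define n2 where "n2 = card I2"
  define g1 where "g1 = enum_set I1"
  define g2 where "g2 = enum_set I2"
  have b1: "bij_betw g1 {0..<n1} I1" using enum_set[OF f1] unfolding g1_def n1_def .
  have b2: "bij_betw g2 {0..<n2} I2" using enum_set[OF f2] unfolding g2_def n2_def .
  define g where "g = (\<lambda>i. if i < n1 then g1 i else g2 (i - n1))"
  have b: "bij_betw g {0..<n1+n2} (I1 \<union> I2)"
  proof -
    have e: "{0..<n1+n2} = {0..<n1} \<union> {n1..<n1+n2}" by auto
    have b2': "bij_betw g {n1..<n1+n2} I2"
    proof -
      have "bij_betw (\<lambda>i. i - n1) {n1..<n1+n2} {0..<n2}"
        by (rule bij_betw_byWitness[of _ "\<lambda>i. i + n1"], auto)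
      from bij_betw_trans[OF this b2] show ?thesis
        by (rule bij_betw_cong[THEN iffD1, rotated], auto simp: g_def)
    qed
    have b1': "bij_betw g {0..<n1} I1"
      using b1 by (rule bij_betw_cong[THEN iffD1, rotated], auto simp: g_def)
    show ?thesis unfolding e
      using bij_betw_combine[OF b1' b2' dis] .
  qed
  have fU: "finite (I1 \<union> I2)" using f1 f2 by auto
  let ?M = "mat (n1+n2) (n1+n2) (\<lambda>(i,j). A (g i) (g j))"
  let ?M1 = "mat n1 n1 (\<lambda>(i,j). A (g1 i) (g1 j))"
  let ?M2 = "mat n1 n2 (\<lambda>(i,j). A (g1 i) (g2 j))"
  let ?M4 = "mat n2 n2 (\<lambda>(i,j). A (g2 i) (g2 j))"
  have g1I: "\<And>i. i < n1 \<Longrightarrow> g1 i \<in> I1" using b1 by (auto simp: bij_betw_def)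
  have g2I: "\<And>i. i < n2 \<Longrightarrow> g2 i \<in> I2" using b2 by (auto simp: bij_betw_def)
  have "?M = four_block_mat ?M1 ?M2 (0\<^sub>m n2 n1) ?M4"
    by (rule eq_matI, auto simp: g_def four_block_mat_def z g1I g2I)
  moreover have "dt (I1 \<union> I2) A = det ?M" by (rule dt_bij[OF fU b])
  ultimately have "dt (I1 \<union> I2) A = det (four_block_mat ?M1 ?M2 (0\<^sub>m n2 n1) ?M4)" by simp
  also have "\<dots> = det ?M1 * det ?M4"
    by (rule det_four_block_mat_lower_left_zero, auto)
  also have "det ?M1 = dt I1 A" by (rule dt_bij[OF f1 b1, symmetric])
  also have "det ?M4 = dt I2 A" by (rule dt_bij[OF f2 b2, symmetric])
  finally show ?thesis .
qed

lemma dt_fam: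
  fixes A :: "'i \<Rightarrow> 'i \<Rightarrow> 'a :: idom" and key :: "'k \<Rightarrow> nat"
  assumes "finite K" "finite I" "lab ` I \<subseteq> K"
    "\<And>i j. i \<in> I \<Longrightarrow> j \<in> I \<Longrightarrow> lab i \<noteq> lab j \<Longrightarrow> key (lab j) \<le> key (lab i) \<Longrightarrow> A i j = 0"
  shows "dt I A = (\<Prod>k\<in>K. dt {i\<in>I. lab i = k} A)"
  using assms
proof (induction "card K" arbitrary: K I rule: less_induct)
  case less
  show ?case
  proof (cases "K = {}")
    case True
    with less.prems have "I = {}" by auto
    with True show ?thesis by (simp add: dt_empty)
  next
    case False
    define m where "m = Max (key ` K)"
    have "m \<in> key ` K" unfolding m_def using False less.prems(1) by auto
    then obtain k0 where k0: "k0 \<in> K" "key k0 = m" by auto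
    have km: "\<And>k. k \<in> K \<Longrightarrow> key k \<le> m" unfolding m_def using less.prems(1) by auto
    define I1 where "I1 = {i\<in>I. lab i \<noteq> k0}"
    define I2 where "I2 = {i\<in>I. lab i = k0}"
    have II: "I = I1 \<union> I2" unfolding I1_def I2_def by auto
    have "dt I A = dt I1 A * dt I2 A" unfolding II
    proof (rule dt_split)
      show "finite I1" "finite I2" using less.prems(2) unfolding I1_def I2_def by auto
      show "I1 \<inter> I2 = {}" unfolding I1_def I2_def by auto
      fix i j assume i: "i \<in> I2" and j: "j \<in> I1"
      have "lab j \<in> K" using j less.prems(3) unfolding I1_def by auto
      with km[OF \<open>lab j \<in> K\<close>] k0 have "key (lab j) \<le> key (lab i)" using i unfolding I2_def by auto
      thus "A i j = 0" using i j less.prems(4) unfolding I1_def I2_def by auto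
    qed
    also have "dt I1 A = (\<Prod>k\<in>K - {k0}. dt {i\<in>I1. lab i = k} A)"
    proof (rule less.hyps)
      show "card (K - {k0}) < card K" using card_Diff1_less[OF less.prems(1) k0(1)] .
      show "finite (K - {k0})" "finite I1" using less.prems(1,2) unfolding I1_def by auto
      show "lab ` I1 \<subseteq> K - {k0}" using less.prems(3) unfolding I1_def by auto
      show "\<And>i j. i \<in> I1 \<Longrightarrow> j \<in> I1 \<Longrightarrow> lab i \<noteq> lab j \<Longrightarrow> key (lab j) \<le> key (lab i) \<Longrightarrow> A i j = 0"
        using less.prems(4) unfolding I1_def by auto
    qed
    also have "(\<Prod>k\<in>K - {k0}. dt {i\<in>I1. lab i = k} A) = (\<Prod>k\<in>K - {k0}. dt {i\<in>I. lab i = k} A)"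
      by (rule prod.cong, auto simp: I1_def intro!: arg_cong[of _ _ "\<lambda>X. dt X A"])
    also have "dt I2 A = dt {i\<in>I. lab i = k0} A" unfolding I2_def ..
    finally show ?thesis using prod.remove[OF less.prems(1) k0(1), of "\<lambda>k. dt {i\<in>I. lab i = k} A"]
      by (simp add: ac_simps)
  qed
qed

lemma dt_cong: assumes "finite I" "\<And>i j. i \<in> I \<Longrightarrow> j \<in> I \<Longrightarrow> A i j = B i j"
  shows "dt I A = dt I B"
proof -
  have b: "bij_betw (enum_set I) {0..<card I} I" by (rule enum_set[OF assms(1)])
  hence "\<And>i. i < card I \<Longrightarrow> enum_set I i \<in> I" by (auto simp: bij_betw_def)
  thus ?thesis unfolding dt_def using assms(2) by (intro arg_cong[of _ _ det] eq_matI, auto)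
qed

lemma dt_mult:
  fixes A B :: "'i \<Rightarrow> 'i \<Rightarrow> 'a :: comm_ring_1"
  assumes fin: "finite I"
  shows "dt I (\<lambda>i j. \<Sum>k\<in>I. A i k * B k j) = dt I A * dt I B"
proof -
  define n where "n = card I"
  define h where "h = enum_set I"
  have b: "bij_betw h {0..<n} I" using enum_set[OF fin] unfolding h_def n_def .
  have hI: "\<And>i. i < n \<Longrightarrow> h i \<in> I" using b by (auto simp: bij_betw_def)
  let ?A = "mat n n (\<lambda>(i,j). A (h i) (h j))"
  let ?B = "mat n n (\<lambda>(i,j). B (h i) (h j))"
  have "mat n n (\<lambda>(i,j). \<Sum>k\<in>I. A (h i) k * B k (h j)) = ?A * ?B"
  proof (rule eq_matI)
    fix i j assume i: "i < dim_row (?A * ?B)" and j: "j < dim_col (?A * ?B)"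
    have "(?A * ?B) $$ (i,j) = (\<Sum>k\<in>{0..<n}. A (h i) (h k) * B (h k) (h j))"
      using i j by (simp add: scalar_prod_def)
    also have "\<dots> = (\<Sum>k\<in>I. A (h i) k * B k (h j))"
      by (rule sum.reindex_bij_betw[OF b])
    finally show "mat n n (\<lambda>(i,j). \<Sum>k\<in>I. A (h i) k * B k (h j)) $$ (i,j) = (?A * ?B) $$ (i,j)"
      using i j by simp
  qed auto
  moreover have "dt I (\<lambda>i j. \<Sum>k\<in>I. A i k * B k j) = det (mat n n (\<lambda>(i,j). \<Sum>k\<in>I. A (h i) k * B k (h j)))"
    by (rule dt_bij[OF fin b])
  ultimately have "dt I (\<lambda>i j. \<Sum>k\<in>I. A i k * B k j) = det (?A * ?B)" by simp
  also have "\<dots> = det ?A * det ?B" by (rule det_mult, auto)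
  finally show ?thesis using dt_bij[OF fin b, of A] dt_bij[OF fin b, of B] by simp
qed


definition Gs :: "nat \<Rightarrow> pic_gen set" where
  "Gs q = {GH, GR} \<union> (\<lambda>(i,j). GA i j) ` ({1..q} \<times> {1..q}) \<union> (\<lambda>(i,j). GB i j) ` ({1..q} \<times> {1..q})"

fun idx :: "nat \<Rightarrow> pic_gen \<Rightarrow> nat" where
  "idx q GH = 0" | "idx q GR = 1"
| "idx q (GA i j) = 2 + (i - 1) * q + (j - 1)"
| "idx q (GB i j) = 2 + q^2 + (i - 1) * q + (j - 1)"

lemma mem_Gs: "s \<in> Gs q \<longleftrightarrow> (s = GH \<or> s = GR \<or> (\<exists>i j. 1 \<le> i \<and> i \<le> q \<and> 1 \<le> j \<and> j \<le> q \<and> (s = GA i j \<or> s = GB i j)))"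
  unfolding Gs_def by auto

lemma finite_Gs: "finite (Gs q)" unfolding Gs_def by auto

lemma idx_lt: fixes i j q :: nat assumes "1 \<le> i" "i \<le> q" "1 \<le> j" "j \<le> q"
  shows "(i - 1) * q + (j - 1) < q^2" "((i - 1) * q + (j - 1)) div q = i - 1" "((i - 1) * q + (j - 1)) mod q = j - 1"
proof -
  have "j - 1 < q" using assms by arith
  hence "(i - 1) * q + (j - 1) < (i - 1) * q + q" by simp
  also have "\<dots> = i * q" using assms by (cases i, auto)
  also have "\<dots> \<le> q * q" using assms by auto
  finally show "(i - 1) * q + (j - 1) < q^2" by (simp add: power2_eq_square)
  have jq: "j - 1 < q" using assms by auto
  show "((i - 1) * q + (j - 1)) div q = i - 1" using jq by (simp add: add.commute)
  show "((i - 1) * q + (j - 1)) mod q = j - 1" using jq by (simp add: add.commute)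
qed

lemma div_lt_q: assumes "(m::nat) < q^2" shows "m div q < q" "m mod q < q"
proof -
  have q: "q > 0" using assms by (cases q, auto)
  show "m div q < q" using assms q by (simp add: div_less_iff_less_mult power2_eq_square)
  show "m mod q < q" using q by simp
qed

lemma gen_of_bij: assumes q: "q \<ge> 1"
  shows "bij_betw (gen_of q) {0..<2 * q^2 + 2} (Gs q)"
proof (rule bij_betw_byWitness[where f' = "idx q"])
  show "\<forall>a\<in>{0..<2 * q^2 + 2}. idx q (gen_of q a) = a"
  proof
    fix k assume k: "k \<in> {0..<2 * q^2 + 2}"
    show "idx q (gen_of q k) = k"
    proof (cases "k < 2")
      case True thus ?thesis by (cases k, auto simp: gen_of_def)
    next
      case False
      show ?thesis
      proof (cases "k < q^2 + 2")
        case True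
        with False show ?thesis unfolding gen_of_def
          by (simp add: div_mult_mod_eq)
      next
        case F2: False
        have "(k - 2 - q^2) div q * q + (k - 2 - q^2) mod q = k - 2 - q^2" by (rule div_mult_mod_eq)
        with False F2 show ?thesis unfolding gen_of_def by simp
      qed
    qed
  qed
  show "\<forall>a'\<in>Gs q. gen_of q (idx q a') = a'"
  proof
    fix s assume "s \<in> Gs q"
    then consider "s = GH" | "s = GR" | i j where "1 \<le> i" "i \<le> q" "1 \<le> j" "j \<le> q" "s = GA i j"
      | i j where "1 \<le> i" "i \<le> q" "1 \<le> j" "j \<le> q" "s = GB i j" unfolding mem_Gs by blast
    thus "gen_of q (idx q s) = s"
    proof cases
      case 3
      note l = idx_lt[OF 3(1-4)]
      show ?thesis using 3 l by (simp add: gen_of_def)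
    next
      case 4
      note l = idx_lt[OF 4(1-4)]
      show ?thesis using 4 l by (simp add: gen_of_def)
    qed (auto simp: gen_of_def)
  qed
  show "gen_of q ` {0..<2 * q^2 + 2} \<subseteq> Gs q"
  proof
    fix s assume "s \<in> gen_of q ` {0..<2 * q^2 + 2}"
    then obtain k where k: "k < 2 * q^2 + 2" "s = gen_of q k" by auto
    show "s \<in> Gs q"
    proof (cases "k < 2")
      case True thus ?thesis using k by (cases k, auto simp: gen_of_def Gs_def)
    next
      case False
      show ?thesis
      proof (cases "k < q^2 + 2")
        case True
        hence "k - 2 < q^2" using False by auto
        note d = div_lt_q[OF this]
        have "(k - 2) mod q < q" using q by simp
        with d False True k show ?thesis unfolding gen_of_def mem_Gs by (auto simp: Suc_le_eq)
      next
        case F2: False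
        hence "k - 2 - q^2 < q^2" using k by auto
        note d = div_lt_q[OF this]
        have "(k - 2 - q^2) mod q < q" using q by simp
        with d False F2 k show ?thesis unfolding gen_of_def mem_Gs by (auto simp: Suc_le_eq)
      qed
    qed
  qed
  show "idx q ` Gs q \<subseteq> {0..<2 * q^2 + 2}"
  proof
    fix k assume "k \<in> idx q ` Gs q"
    then obtain s where s: "s \<in> Gs q" "k = idx q s" by auto
    from s(1) consider "s = GH" | "s = GR" | i j where "1 \<le> i" "i \<le> q" "1 \<le> j" "j \<le> q" "s = GA i j"
      | i j where "1 \<le> i" "i \<le> q" "1 \<le> j" "j \<le> q" "s = GB i j" unfolding mem_Gs by blast
    thus "k \<in> {0..<2 * q^2 + 2}"
    proof cases
      case 3 
      have "(i - 1) * q + (j - 1) < q^2" by (rule idx_lt(1)[OF 3(1-4)])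
      hence "2 + (i - 1) * q + (j - 1) < 2 * q^2 + 2" by linarith
      thus ?thesis using s 3 by simp
    next
      case 4
      have "(i - 1) * q + (j - 1) < q^2" by (rule idx_lt(1)[OF 4(1-4)])
      hence "2 + q^2 + (i - 1) * q + (j - 1) < 2 * q^2 + 2" by linarith
      thus ?thesis using s 4 by simp
    qed (use s q in \<open>auto simp: power2_eq_square\<close>)
  qed
qed


lemma sum_Gs: "(\<Sum>k\<in>Gs q. g k) = g GH + g GR + (\<Sum>i\<in>{1..q}. \<Sum>j\<in>{1..q}. g (GA i j))
   + (\<Sum>i\<in>{1..q}. \<Sum>j\<in>{1..q}. g (GB i j))"
proof -
  let ?P = "{1..q} \<times> {1..q}"
  let ?A = "(\<lambda>(i,j). GA i j) ` ?P" and ?B = "(\<lambda>(i,j). GB i j) ` ?P"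
  have fA: "finite ?A" and fB: "finite ?B" by auto
  have "(\<Sum>k\<in>Gs q. g k) = (\<Sum>k\<in>({GH,GR} \<union> ?A) \<union> ?B. g k)" unfolding Gs_def ..
  also have "\<dots> = (\<Sum>k\<in>{GH,GR} \<union> ?A. g k) + (\<Sum>k\<in>?B. g k)"
    by (rule sum.union_disjoint, insert fA fB, auto)
  also have "(\<Sum>k\<in>{GH,GR} \<union> ?A. g k) = (\<Sum>k\<in>{GH,GR}. g k) + (\<Sum>k\<in>?A. g k)"
    by (rule sum.union_disjoint, insert fA, auto)
  also have "(\<Sum>k\<in>?A. g k) = (\<Sum>(i,j)\<in>?P. g (GA i j))"
    by (subst sum.reindex, auto simp: inj_on_def intro!: sum.cong)
  also have "\<dots> = (\<Sum>i\<in>{1..q}. \<Sum>j\<in>{1..q}. g (GA i j))" by (simp add: sum.cartesian_product)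
  also have "(\<Sum>k\<in>?B. g k) = (\<Sum>(i,j)\<in>?P. g (GB i j))"
    by (subst sum.reindex, auto simp: inj_on_def intro!: sum.cong)
  also have "\<dots> = (\<Sum>i\<in>{1..q}. \<Sum>j\<in>{1..q}. g (GB i j))" by (simp add: sum.cartesian_product)
  finally show ?thesis by (simp add: add.assoc)
qed

lemma sum_T: fixes q c d :: nat assumes "c \<in> {1..q}" "d \<in> {1..q}"
  shows "(\<Sum>i\<in>{1..q}. \<Sum>j\<in>{1..q}. (if c = j \<or> d = i then g i j else (0::rat)))
    = (\<Sum>i\<in>{1..q}. g i c) + (\<Sum>j\<in>{1..q}. g d j) - g d c"
proof -
  have "(\<Sum>i\<in>{1..q}. \<Sum>j\<in>{1..q}. (if c = j \<or> d = i then g i j else (0::rat)))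
    = (\<Sum>i\<in>{1..q}. g i c + (if i = d then (\<Sum>j\<in>{1..q}. g i j) else 0) - (if i = d then g i c else 0))"
  proof (rule sum.cong[OF refl])
    fix i assume i: "i \<in> {1..q}"
    show "(\<Sum>j\<in>{1..q}. (if c = j \<or> d = i then g i j else (0::rat))) = 
      g i c + (if i = d then (\<Sum>j\<in>{1..q}. g i j) else 0) - (if i = d then g i c else 0)"
    proof (cases "i = d")
      case True thus ?thesis by simp
    next
      case False 
      hence "(\<Sum>j\<in>{1..q}. (if c = j \<or> d = i then g i j else (0::rat))) = (\<Sum>j\<in>{1..q}. (if c = j then g i j else (0::rat)))"
        by (intro sum.cong refl, auto)
      also have "\<dots> = g i c" using assms by (subst sum.delta', auto)
      finally show ?thesis using False by simp
    qed
  qed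
  also have "\<dots> = (\<Sum>i\<in>{1..q}. g i c) + (\<Sum>j\<in>{1..q}. g d j) - g d c"
    using assms by (simp add: sum.distrib sum_subtractf)
  finally show ?thesis .
qed

definition Lf :: "nat \<Rightarrow> (pic_gen \<Rightarrow> rat) \<Rightarrow> pic_gen \<Rightarrow> rat" where
  "Lf q f t = (let Q = of_nat q; 
      CA = (\<lambda>c. \<Sum>i\<in>{1..q}. f (GA i c)); RA = (\<lambda>d. \<Sum>j\<in>{1..q}. f (GA d j)) in
     case t of GH \<Rightarrow> (Q^2-Q+1) * f GH + (Q^2-Q) * f GR + (\<Sum>i\<in>{1..q}. \<Sum>j\<in>{1..q}. f (GA i j))
     | GR \<Rightarrow> -(Q-2) * f GH - (Q-1) * f GR
     | GA c d \<Rightarrow> -(2*Q-3) * (f GH + f GR) - (CA c + RA d - f (GA d c)) + f (GB d c)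
     | GB c d \<Rightarrow> -(2*Q-2) * (f GH + f GR) - f (GA d c) - (CA c + RA d - f (GA d c)) + f (GB d c))"

lemma double_delta: fixes q c d :: nat assumes "c \<in> {1..q}" "d \<in> {1..q}"
  shows "(\<Sum>i\<in>{1..q}. \<Sum>j\<in>{1..q}. (if c = j \<and> d = i then g i j else (0::rat))) = g d c"
proof -
  have "(\<Sum>i\<in>{1..q}. \<Sum>j\<in>{1..q}. (if c = j \<and> d = i then g i j else (0::rat))) = 
     (\<Sum>i\<in>{1..q}. if d = i then g i c else 0)"
    using assms by (intro sum.cong refl, auto)
  also have "\<dots> = g d c" using assms by (subst sum.delta', auto)
  finally show ?thesis .
qed

lemma L_formula: assumes t: "t \<in> Gs q"
  shows "(\<Sum>k\<in>Gs q. of_int (KZ_coef q k t) * f k) = Lf q f t"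
proof -
  from t consider "t = GH" | "t = GR" | c d where "c \<in> {1..q}" "d \<in> {1..q}" "t = GA c d"
      | c d where "c \<in> {1..q}" "d \<in> {1..q}" "t = GB c d" unfolding mem_Gs by auto
  thus ?thesis
  proof cases
    case 1 thus ?thesis by (simp add: sum_Gs Lf_def Let_def algebra_simps)
  next
    case 2 thus ?thesis by (simp add: sum_Gs Lf_def Let_def algebra_simps)
  next
    case 3
    have a: "(\<Sum>i\<in>{1..q}. \<Sum>j\<in>{1..q}. of_int (KZ_coef q (GA i j) t) * f (GA i j)) = 
      - (\<Sum>i\<in>{1..q}. \<Sum>j\<in>{1..q}. (if c = j \<or> d = i then f (GA i j) else 0))"
      using 3 by (simp add: sum_negf[symmetric], intro sum.cong refl, auto simp: T_set_def)
    have b: "(\<Sum>i\<in>{1..q}. \<Sum>j\<in>{1..q}. of_int (KZ_coef q (GB i j) t) * f (GB i j)) = 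
      (\<Sum>i\<in>{1..q}. \<Sum>j\<in>{1..q}. (if c = j \<and> d = i then f (GB i j) else 0))"
      using 3 by (intro sum.cong refl, auto)
    show ?thesis unfolding sum_Gs a b sum_T[OF 3(1,2)] double_delta[OF 3(1,2)]
      using 3 by (simp add: Lf_def Let_def algebra_simps)
  next
    case 4
    have a: "(\<Sum>i\<in>{1..q}. \<Sum>j\<in>{1..q}. of_int (KZ_coef q (GA i j) t) * f (GA i j)) = 
      - (\<Sum>i\<in>{1..q}. \<Sum>j\<in>{1..q}. (if c = j \<and> d = i then f (GA i j) else 0))
      - (\<Sum>i\<in>{1..q}. \<Sum>j\<in>{1..q}. (if c = j \<or> d = i then f (GA i j) else 0))"
      using 4 by (simp only: sum_negf[symmetric] sum_subtractf[symmetric], intro sum.cong refl, auto simp: T_set_def)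
    have b: "(\<Sum>i\<in>{1..q}. \<Sum>j\<in>{1..q}. of_int (KZ_coef q (GB i j) t) * f (GB i j)) = 
      (\<Sum>i\<in>{1..q}. \<Sum>j\<in>{1..q}. (if c = j \<and> d = i then f (GB i j) else 0))"
      using 4 by (intro sum.cong refl, auto)
    show ?thesis unfolding sum_Gs a b sum_T[OF 4(1,2)] double_delta[OF 4(1,2)]
      using 4 by (simp add: Lf_def Let_def algebra_simps)
  qed
qed


definition u :: "nat \<Rightarrow> nat \<Rightarrow> rat" where
  "u a i = (if a = 1 then 1 else if i = a then 1 else 0)"

definition yy :: "nat \<Rightarrow> nat \<Rightarrow> nat \<Rightarrow> nat \<Rightarrow> rat" where
  "yy a b i j = (if a = 1 \<and> b \<noteq> 1 then u 1 i * u b j + u b i * u 1 j else u a i * u b j)"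

definition wv :: "nat \<Rightarrow> pic_gen \<Rightarrow> pic_gen \<Rightarrow> rat" where
  "wv q s t = (case s of GH \<Rightarrow> (if t = GH then 1 else 0)
    | GR \<Rightarrow> (if t = GR then 1 else 0)
    | GA a b \<Rightarrow> (case t of GA i j \<Rightarrow> yy a b i j | GR \<Rightarrow> (if a = 1 \<and> b = 1 then - of_nat q else 0) | _ \<Rightarrow> 0)
    | GB a b \<Rightarrow> (case t of GB i j \<Rightarrow> yy a b i j | GH \<Rightarrow> (if a = 1 \<and> b = 1 then - of_nat q / 2 else 0)
        | GR \<Rightarrow> (if a = 1 \<and> b = 1 then of_nat q else 0) | _ \<Rightarrow> 0))"

definition Dcol :: "nat \<Rightarrow> pic_gen \<Rightarrow> (pic_gen \<times> rat) list" where
"Dcol q s = (let Q = (of_nat q :: rat) in case s of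
   GH \<Rightarrow> [(GH,1),(GR,2),(GA 1 1, -(2*Q-3)),(GB 1 1, -2*(Q-1))]
 | GR \<Rightarrow> [(GR,1),(GA 1 1, -(2*Q-3)),(GB 1 1, -2*(Q-1))]
 | GA a b \<Rightarrow> (if a = 1 \<and> b = 1 then [(GA 1 1, 2*Q^2-5*Q+1),(GB 1 1, 2*(Q^2-2*Q))]
     else if a = 1 then [(GH,Q),(GA 1 1,-2),(GB 1 1,-2),(GA 1 b,1-Q),(GB 1 b,-Q)]
     else if b = 1 then [(GH,Q/2),(GA 1 1,-1),(GB 1 1,-1),(GA 1 a,1-Q),(GA a 1,Q-1),(GB 1 a,-Q),(GB a 1,Q)]
     else [(GH,1),(GA b a,1),(GA b 1,-1),(GB b 1,-1),(GA 1 a,-1),(GA a 1,1),(GB 1 a,-1),(GB a 1,1)])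
 | GB a b \<Rightarrow> (if a = 1 \<and> b = 1 then [(GA 1 1, (2 + 3*Q - 2*Q^2)/2),(GB 1 1, 1 + Q - Q^2)]
     else if a = 1 then [(GA 1 b,1),(GB 1 b,1)]
     else if b = 1 then [(GA 1 a,1),(GA a 1,-1),(GB 1 a,1),(GB a 1,-1)]
     else [(GA b a,1),(GB b a,1)]))"

definition Dm :: "nat \<Rightarrow> pic_gen \<Rightarrow> pic_gen \<Rightarrow> rat" where
  "Dm q t s = sum_list (map snd (filter (\<lambda>p. fst p = t) (Dcol q s)))"

lemma sum_list_filter_swap: fixes f :: "'i \<Rightarrow> rat"
  assumes "finite G" "fst ` set L \<subseteq> G"
  shows "(\<Sum>k\<in>G. f k * sum_list (map snd (filter (\<lambda>p. fst p = k) L))) = sum_list (map (\<lambda>p. snd p * f (fst p)) L)"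
  using assms(2)
proof (induction L)
  case Nil thus ?case by (simp add: sum.neutral)
next
  case (Cons p L)
  have "(\<Sum>k\<in>G. f k * sum_list (map snd (filter (\<lambda>p. fst p = k) (p # L)))) = 
    (\<Sum>k\<in>G. (if k = fst p then f k * snd p else 0) + f k * sum_list (map snd (filter (\<lambda>p. fst p = k) L)))"
    by (intro sum.cong refl, auto simp: algebra_simps)
  also have "\<dots> = f (fst p) * snd p + (\<Sum>k\<in>G. f k * sum_list (map snd (filter (\<lambda>p. fst p = k) L)))"
    using Cons.prems assms(1) by (simp add: sum.distrib sum.delta)
  also have "\<dots> = sum_list (map (\<lambda>p. snd p * f (fst p)) (p # L))" using Cons by (simp add: mult.commute)
  finally show ?case .
qed

lemma sum_u: fixes a q :: nat assumes "1 \<le> a" "a \<le> q"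
  shows "(\<Sum>i\<in>{1..q}. u a i) = (if a = 1 then of_nat q else 1)"
  using assms by (auto simp: u_def sum.delta)

lemma sum_u_mult: fixes a q :: nat assumes "1 \<le> a" "a \<le> q"
  shows "(\<Sum>i\<in>{1..q}. u a i * x) = (if a = 1 then of_nat q else 1) * x"
        "(\<Sum>i\<in>{1..q}. x * u a i) = x * (if a = 1 then of_nat q else 1)"
  using sum_u[OF assms] by (simp_all add: sum_distrib_right[symmetric] sum_distrib_left[symmetric])


declare One_nat_def[simp del]

definition sg :: "nat \<Rightarrow> nat \<Rightarrow> rat" where "sg q a = (if a = 1 then of_nat q else 1)"

lemma sum_yy_col: fixes a b q :: nat assumes "1 \<le> a" "a \<le> q" "1 \<le> b" "b \<le> q"
  shows "(\<Sum>i\<in>{1..q}. yy a b i c) = (if a = 1 \<and> b \<noteq> 1 then sg q 1 * u b c + sg q b * u 1 c else sg q a * u b c)"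
proof -
  have o: "1 \<le> (1::nat)" "1 \<le> q" using assms by auto
  show ?thesis unfolding yy_def using assms sum_u[OF assms(1,2)] sum_u[OF assms(3,4)] sum_u[OF o] sum_u_mult(1)[OF assms(1,2)] sum_u_mult(1)[OF assms(3,4)] sum_u_mult(1)[OF o]
    by (auto simp: sum.distrib sg_def)
qed

lemma sum_yy_row: fixes a b q :: nat assumes "1 \<le> a" "a \<le> q" "1 \<le> b" "b \<le> q"
  shows "(\<Sum>j\<in>{1..q}. yy a b d j) = (if a = 1 \<and> b \<noteq> 1 then u 1 d * sg q b + u b d * sg q 1 else u a d * sg q b)"
proof -
  have o: "1 \<le> (1::nat)" "1 \<le> q" using assms by auto
  show ?thesis unfolding yy_def using assms sum_u[OF assms(1,2)] sum_u[OF assms(3,4)] sum_u[OF o] sum_u_mult(2)[OF assms(1,2)] sum_u_mult(2)[OF assms(3,4)] sum_u_mult(2)[OF o]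
    by (auto simp: sum.distrib sg_def)
qed

lemma sum_yy_all: fixes a b q :: nat assumes "1 \<le> a" "a \<le> q" "1 \<le> b" "b \<le> q"
  shows "(\<Sum>i\<in>{1..q}. \<Sum>j\<in>{1..q}. yy a b i j) = (if a = 1 \<and> b \<noteq> 1 then 2 * sg q 1 * sg q b else sg q a * sg q b)"
proof -
  have "(\<Sum>i\<in>{1..q}. \<Sum>j\<in>{1..q}. yy a b i j) = (\<Sum>i\<in>{1..q}. (if a = 1 \<and> b \<noteq> 1 then u 1 i * sg q b + u b i * sg q 1 else u a i * sg q b))"
    using sum_yy_row[OF assms] by simp
  also have "\<dots> = (if a = 1 \<and> b \<noteq> 1 then 2 * sg q 1 * sg q b else sg q a * sg q b)"
  proof -
    have o: "1 \<le> (1::nat)" "1 \<le> q" using assms by auto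
    show ?thesis using sum_u[OF assms(1,2)] sum_u[OF assms(3,4)] sum_u[OF o] sum_u_mult(1)[OF assms(1,2)] sum_u_mult(1)[OF assms(3,4)] sum_u_mult(1)[OF o]
      by (auto simp: sum.distrib sg_def)
  qed
  finally show ?thesis .
qed

lemma core_A: fixes a b q :: nat assumes q: "q \<ge> 2" and ab: "1 \<le> a" "a \<le> q" "1 \<le> b" "b \<le> q" and t: "t \<in> Gs q"
  shows "Lf q (wv q (GA a b)) t = sum_list (map (\<lambda>p. snd p * wv q (fst p) t) (Dcol q (GA a b)))"
proof -
  from t consider "t = GH" | "t = GR" | c d where "1 \<le> c" "c \<le> q" "1 \<le> d" "d \<le> q" "t = GA c d"
      | c d where "1 \<le> c" "c \<le> q" "1 \<le> d" "d \<le> q" "t = GB c d" unfolding mem_Gs by auto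
  thus ?thesis
  proof cases
    case 1 thus ?thesis using ab
      by (simp add: Lf_def Let_def wv_def Dcol_def sum_yy_all sg_def, auto simp: yy_def u_def field_simps power2_eq_square)
  next
    case 2 thus ?thesis using ab
      by (simp add: Lf_def Let_def wv_def Dcol_def sum_yy_all sg_def, auto simp: yy_def u_def field_simps power2_eq_square)
  next
    case 3 thus ?thesis using ab
      by (simp add: Lf_def Let_def wv_def Dcol_def sum_yy_col sum_yy_row sg_def, auto simp: yy_def u_def field_simps power2_eq_square)
  next
    case 4 thus ?thesis using ab
      by (simp add: Lf_def Let_def wv_def Dcol_def sum_yy_col sum_yy_row sg_def, auto simp: yy_def u_def field_simps power2_eq_square)
  qed
qed


lemma core_B: fixes a b q :: nat assumes q: "q \<ge> 2" and ab: "1 \<le> a" "a \<le> q" "1 \<le> b" "b \<le> q" and t: "t \<in> Gs q"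
  shows "Lf q (wv q (GB a b)) t = sum_list (map (\<lambda>p. snd p * wv q (fst p) t) (Dcol q (GB a b)))"
proof -
  from t consider "t = GH" | "t = GR" | c d where "1 \<le> c" "c \<le> q" "1 \<le> d" "d \<le> q" "t = GA c d"
      | c d where "1 \<le> c" "c \<le> q" "1 \<le> d" "d \<le> q" "t = GB c d" unfolding mem_Gs by auto
  thus ?thesis
  proof cases
    case 1 thus ?thesis using ab
      by (simp add: Lf_def Let_def wv_def Dcol_def sum_yy_all sg_def, auto simp: yy_def u_def field_simps power2_eq_square)
  next
    case 2 thus ?thesis using ab
      by (simp add: Lf_def Let_def wv_def Dcol_def sum_yy_all sg_def, auto simp: yy_def u_def field_simps power2_eq_square)
  next
    case 3 thus ?thesis using ab
      by (simp add: Lf_def Let_def wv_def Dcol_def sum_yy_col sum_yy_row sg_def, auto simp: yy_def u_def field_simps power2_eq_square)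
  next
    case 4 thus ?thesis using ab
      by (simp add: Lf_def Let_def wv_def Dcol_def sum_yy_col sum_yy_row sg_def, auto simp: yy_def u_def field_simps power2_eq_square)
  qed
qed


lemma core_HR: assumes q: "q \<ge> 2" and s: "s = GH \<or> s = GR" and t: "t \<in> Gs q"
  shows "Lf q (wv q s) t = sum_list (map (\<lambda>p. snd p * wv q (fst p) t) (Dcol q s))"
proof -
  from t consider "t = GH" | "t = GR" | c d where "1 \<le> c" "c \<le> q" "1 \<le> d" "d \<le> q" "t = GA c d"
      | c d where "1 \<le> c" "c \<le> q" "1 \<le> d" "d \<le> q" "t = GB c d" unfolding mem_Gs by auto
  thus ?thesis using s
    by (cases; auto simp: Lf_def Let_def wv_def Dcol_def yy_def u_def field_simps power2_eq_square)
qed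


definition kc :: "nat \<Rightarrow> nat \<Rightarrow> nat" where
  "kc a b = (if a = 1 \<and> b = 1 then 3 else if a = 1 then 2 else if b = 1 then 1 else 0)"

fun rS :: "pic_gen \<Rightarrow> nat" where
  "rS GH = 0" | "rS GR = 0" | "rS (GA a b) = kc a b" | "rS (GB a b) = kc a b"

lemma wv_diag: "k \<in> Gs q \<Longrightarrow> wv q k k = 1"
  unfolding mem_Gs by (auto simp: wv_def yy_def u_def)

lemma wv_tri: assumes "i \<in> Gs q" "j \<in> Gs q" "i \<noteq> j" "rS j \<le> rS i"
  shows "wv q j i = 0"
  using assms unfolding mem_Gs by (auto simp: wv_def yy_def u_def kc_def split: if_splits)

lemma const_poly_sum: "(\<Sum>k\<in>A. [:f k:]) = [:\<Sum>k\<in>A. f k:]"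
  by (induction A rule: infinite_finite_induct, auto)

lemma dt_S: "dt (Gs q) (\<lambda>t s. [:wv q s t:]) = 1"
proof -
  have "dt (Gs q) (\<lambda>t s. [:wv q s t:]) = (\<Prod>k\<in>Gs q. dt {i\<in>Gs q. id i = k} (\<lambda>t s. [:wv q s t:]))"
    by (rule dt_fam[where key = rS], auto simp: finite_Gs wv_tri)
  also have "\<dots> = (\<Prod>k\<in>Gs q. 1)"
  proof (rule prod.cong[OF refl])
    fix k assume k: "k \<in> Gs q"
    hence "{i\<in>Gs q. id i = k} = {k}" by auto
    thus "dt {i\<in>Gs q. id i = k} (\<lambda>t s. [:wv q s t:]) = 1" using wv_diag[OF k] by (simp add: dt_single)
  qed
  finally show ?thesis by simp
qed


definition Cm :: "nat \<Rightarrow> pic_gen \<Rightarrow> pic_gen \<Rightarrow> rat poly" where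
  "Cm q t s = (if t = s then [:0,1:] else 0) + [:- of_int (KZ_coef q s t):]"

definition Em :: "nat \<Rightarrow> pic_gen \<Rightarrow> pic_gen \<Rightarrow> rat poly" where
  "Em q t s = (if t = s then [:0,1:] else 0) + [:- Dm q t s:]"

lemma Dcol_in: assumes "q \<ge> 2" "s \<in> Gs q" shows "fst ` set (Dcol q s) \<subseteq> Gs q"
  using assms by (auto simp: Dcol_def Let_def mem_Gs split: if_splits)

lemma core: assumes q: "q \<ge> 2" and s: "s \<in> Gs q" and t: "t \<in> Gs q"
  shows "(\<Sum>k\<in>Gs q. of_int (KZ_coef q k t) * wv q s k) = (\<Sum>k\<in>Gs q. wv q k t * Dm q k s)"
proof -
  have "(\<Sum>k\<in>Gs q. of_int (KZ_coef q k t) * wv q s k) = Lf q (wv q s) t" by (rule L_formula[OF t])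
  also have "\<dots> = sum_list (map (\<lambda>p. snd p * wv q (fst p) t) (Dcol q s))"
  proof -
    from s consider "s = GH \<or> s = GR" | a b where "1 \<le> a" "a \<le> q" "1 \<le> b" "b \<le> q" "s = GA a b"
      | a b where "1 \<le> a" "a \<le> q" "1 \<le> b" "b \<le> q" "s = GB a b" unfolding mem_Gs by auto
    thus ?thesis
    proof cases
      case 1 thus ?thesis using core_HR[OF q _ t] by auto
    next
      case 2 thus ?thesis using core_A[OF q 2(1-4) t] by simp
    next
      case 3 thus ?thesis using core_B[OF q 3(1-4) t] by simp
    qed
  qed
  also have "\<dots> = (\<Sum>k\<in>Gs q. wv q k t * Dm q k s)"
    unfolding Dm_def by (rule sum_list_filter_swap[symmetric, OF finite_Gs Dcol_in[OF q s]])
  finally show ?thesis .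
qed

lemma mat_ident: assumes q: "q \<ge> 2" and s: "s \<in> Gs q" and t: "t \<in> Gs q"
  shows "(\<Sum>k\<in>Gs q. Cm q t k * [:wv q s k:]) = (\<Sum>k\<in>Gs q. [:wv q k t:] * Em q k s)"
proof -
  have "(\<Sum>k\<in>Gs q. Cm q t k * [:wv q s k:]) = 
     (\<Sum>k\<in>Gs q. (if t = k then [:0,1:] * [:wv q s k:] else 0)) + (\<Sum>k\<in>Gs q. [:- (of_int (KZ_coef q k t) * wv q s k):])"
    unfolding Cm_def sum.distrib[symmetric] by (rule sum.cong[OF refl], auto simp: distrib_right)
  also have "\<dots> = [:0,1:] * [:wv q s t:] - [:(\<Sum>k\<in>Gs q. of_int (KZ_coef q k t) * wv q s k):]"
    using t by (simp add: sum.delta finite_Gs const_poly_sum sum_negf)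
  also have "\<dots> = [:0,1:] * [:wv q s t:] - [:(\<Sum>k\<in>Gs q. wv q k t * Dm q k s):]"
    unfolding core[OF q s t] ..
  also have "\<dots> = (\<Sum>k\<in>Gs q. (if k = s then [:wv q k t:] * [:0,1:] else 0)) + (\<Sum>k\<in>Gs q. [:- (wv q k t * Dm q k s):])"
    using s by (simp add: sum.delta' finite_Gs const_poly_sum sum_negf mult.commute)
  also have "\<dots> = (\<Sum>k\<in>Gs q. [:wv q k t:] * Em q k s)"
    unfolding Em_def sum.distrib[symmetric] by (rule sum.cong[OF refl], auto simp: distrib_left mult.commute)
  finally show ?thesis .
qed

lemma dt_C_E: assumes q: "q \<ge> 2"
  shows "dt (Gs q) (Cm q) = dt (Gs q) (Em q)"
proof -
  let ?S = "\<lambda>t s. [:wv q s t:]"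
  have "dt (Gs q) (Cm q) * dt (Gs q) ?S = dt (Gs q) (\<lambda>i j. \<Sum>k\<in>Gs q. Cm q i k * ?S k j)"
    by (rule dt_mult[OF finite_Gs, symmetric])
  also have "\<dots> = dt (Gs q) (\<lambda>i j. \<Sum>k\<in>Gs q. ?S i k * Em q k j)"
    by (rule dt_cong[OF finite_Gs], rule mat_ident[OF q], auto)
  also have "\<dots> = dt (Gs q) ?S * dt (Gs q) (Em q)"
    by (rule dt_mult[OF finite_Gs])
  finally show ?thesis using dt_S[of q] by simp
qed


datatype blab = LF0 | LF1 | LM1 nat | LM2 nat | LTA nat nat | LTB nat nat

fun lab :: "pic_gen \<Rightarrow> blab" where
  "lab GH = LF1" | "lab GR = LF1"
| "lab (GA a b) = (if a = 1 \<and> b = 1 then LF0 else if a = 1 then LM1 b else if b = 1 then LM2 a else LTA (min a b) (max a b))"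
| "lab (GB a b) = (if a = 1 \<and> b = 1 then LF0 else if a = 1 then LM1 b else if b = 1 then LM2 a else LTB (min a b) (max a b))"

fun bkey :: "blab \<Rightarrow> nat" where
  "bkey LF0 = 0" | "bkey LF1 = 1" | "bkey (LM1 c) = 2" | "bkey (LM2 c) = 3" | "bkey (LTA a b) = 4" | "bkey (LTB a b) = 5"

definition Pq :: "nat \<Rightarrow> (nat \<times> nat) set" where "Pq q = {(a,b). 2 \<le> a \<and> a \<le> b \<and> b \<le> q}"

definition Kq :: "nat \<Rightarrow> blab set" where
  "Kq q = {LF0, LF1} \<union> LM1 ` {2..q} \<union> LM2 ` {2..q} \<union> (\<lambda>(a,b). LTA a b) ` Pq q \<union> (\<lambda>(a,b). LTB a b) ` Pq q"

lemma finite_Pq: "finite (Pq q)"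
  by (rule finite_subset[of _ "{0..q} \<times> {0..q}"], auto simp: Pq_def)

lemma finite_Kq: "finite (Kq q)" unfolding Kq_def using finite_Pq by auto

lemma lab_Kq: "lab ` Gs q \<subseteq> Kq q"
proof
  fix k assume "k \<in> lab ` Gs q"
  then obtain s where s: "s \<in> Gs q" "k = lab s" by auto
  from s(1) consider "s = GH \<or> s = GR" | a b where "1 \<le> a" "a \<le> q" "1 \<le> b" "b \<le> q" "s = GA a b \<or> s = GB a b"
    unfolding mem_Gs by auto
  thus "k \<in> Kq q"
  proof cases
    case 1 thus ?thesis using s by (auto simp: Kq_def)
  next
    case 2
    have P: "a \<noteq> 1 \<Longrightarrow> b \<noteq> 1 \<Longrightarrow> (min a b, max a b) \<in> Pq q" using 2 by (auto simp: Pq_def min_def max_def)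
    show ?thesis
    proof (cases "a = 1 \<and> b = 1")
      case True thus ?thesis using s 2 by (auto simp: Kq_def)
    next
      case F: False
      show ?thesis
      proof (cases "a = 1")
        case True thus ?thesis using s 2 F by (auto simp: Kq_def)
      next
        case F2: False
        show ?thesis
        proof (cases "b = 1")
          case True thus ?thesis using s 2 F F2 by (auto simp: Kq_def)
        next
          case False
          from P[OF F2 False] have "LTA (min a b) (max a b) \<in> Kq q" "LTB (min a b) (max a b) \<in> Kq q"
            unfolding Kq_def by (auto intro!: image_eqI[where x = "(min a b, max a b)"])
          thus ?thesis using s 2 F F2 False by auto
        qed
      qed
    qed
  qed
qed

lemma Dm_nz: "Dm q t s \<noteq> 0 \<Longrightarrow> t \<in> fst ` set (Dcol q s)"
proof -
  assume "Dm q t s \<noteq> 0"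
  hence "filter (\<lambda>p. fst p = t) (Dcol q s) \<noteq> []" unfolding Dm_def by auto
  thus ?thesis by (auto simp: filter_empty_conv)
qed

lemma Dcol_key: assumes "s \<in> Gs q" "t \<in> fst ` set (Dcol q s)" "lab t \<noteq> lab s"
  shows "bkey (lab t) < bkey (lab s)"
  using assms by (auto simp: mem_Gs Dcol_def Let_def min.commute max.commute split: if_splits)

lemma Em_zero: assumes "i \<in> Gs q" "j \<in> Gs q" "lab i \<noteq> lab j" "bkey (lab j) \<le> bkey (lab i)"
  shows "Em q i j = 0"
proof -
  have "i \<noteq> j" using assms(3) by auto
  moreover have "Dm q i j = 0"
  proof (rule ccontr)
    assume "Dm q i j \<noteq> 0"
    from Dcol_key[OF assms(2) Dm_nz[OF this] assms(3)] assms(4) show False by simp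
  qed
  ultimately show ?thesis by (simp add: Em_def)
qed

lemma dt_E_prod: "dt (Gs q) (Em q) = (\<Prod>k\<in>Kq q. dt {i\<in>Gs q. lab i = k} (Em q))"
  by (rule dt_fam[where key = bkey], auto simp: finite_Kq finite_Gs lab_Kq Em_zero)

lemma pair_val: "x \<noteq> y \<Longrightarrow> dt {x,y} (Em q) = [:- Dm q x x, 1:] * [:- Dm q y y, 1:] - [:Dm q x y * Dm q y x:]"
  by (simp add: dt_pair Em_def)


lemma fib_F0: "q \<ge> 1 \<Longrightarrow> {i\<in>Gs q. lab i = LF0} = {GA 1 1, GB 1 1}"
  by (auto simp: mem_Gs split: if_splits)
lemma fib_F1: "{i\<in>Gs q. lab i = LF1} = {GH, GR}"
  by (auto simp: mem_Gs split: if_splits)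
lemma fib_M1: "2 \<le> c \<Longrightarrow> c \<le> q \<Longrightarrow> {i\<in>Gs q. lab i = LM1 c} = {GA 1 c, GB 1 c}"
  by (auto simp: mem_Gs split: if_splits)
lemma fib_M2: "2 \<le> c \<Longrightarrow> c \<le> q \<Longrightarrow> {i\<in>Gs q. lab i = LM2 c} = {GA c 1, GB c 1}"
  by (auto simp: mem_Gs split: if_splits)
lemma fib_TA: "2 \<le> a \<Longrightarrow> a \<le> b \<Longrightarrow> b \<le> q \<Longrightarrow> {i\<in>Gs q. lab i = LTA a b} = {GA a b, GA b a}"
  by (auto simp: mem_Gs min_def max_def split: if_splits)
lemma fib_TB: "2 \<le> a \<Longrightarrow> a \<le> b \<Longrightarrow> b \<le> q \<Longrightarrow> {i\<in>Gs q. lab i = LTB a b} = {GB a b, GB b a}"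
  by (auto simp: mem_Gs min_def max_def split: if_splits)

lemma V_F0: "dt {GA 1 1, GB 1 1} (Em q) = [:1, - ((of_nat q)^2 - 4 * of_nat q + 2), 1:]"
  by (simp add: pair_val Dm_def Dcol_def Let_def, simp add: field_simps power2_eq_square)

lemma V_F1: "dt {GH, GR} (Em q) = [:-1, 1:]^2"
  by (simp add: pair_val Dm_def Dcol_def Let_def power2_eq_square)

lemma V_M1: "2 \<le> c \<Longrightarrow> dt {GA 1 c, GB 1 c} (Em q) = [:1, of_nat q - 2, 1:]"
  by (simp add: pair_val Dm_def Dcol_def Let_def; simp add: field_simps)

lemma V_M2: "2 \<le> c \<Longrightarrow> dt {GA c 1, GB c 1} (Em q) = [:1, - (of_nat q - 2), 1:]"
  by (simp add: pair_val Dm_def Dcol_def Let_def; simp add: field_simps)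

lemma V_TA: "2 \<le> a \<Longrightarrow> a \<le> b \<Longrightarrow> dt {GA a b, GA b a} (Em q) = (if a < b then [:-1, 0, 1:] else [:-1, 1:])"
  by (cases "a = b", auto simp: pair_val dt_single Em_def Dm_def Dcol_def Let_def)

lemma V_TB: "2 \<le> a \<Longrightarrow> a \<le> b \<Longrightarrow> dt {GB a b, GB b a} (Em q) = (if a < b then [:-1, 0, 1:] else [:-1, 1:])"
  by (cases "a = b", auto simp: pair_val dt_single Em_def Dm_def Dcol_def Let_def)


lemma prod_Kq: "(\<Prod>k\<in>Kq q. f k) = f LF0 * f LF1 * (\<Prod>c\<in>{2..q}. f (LM1 c)) * (\<Prod>c\<in>{2..q}. f (LM2 c))
   * (\<Prod>p\<in>Pq q. f (LTA (fst p) (snd p))) * (\<Prod>p\<in>Pq q. f (LTB (fst p) (snd p)))"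
proof -
  let ?A = "{LF0, LF1}" and ?B = "LM1 ` {2..q}" and ?C = "LM2 ` {2..q}"
    and ?D = "(\<lambda>(a,b). LTA a b) ` Pq q" and ?E = "(\<lambda>(a,b). LTB a b) ` Pq q"
  have fin: "finite ?A" "finite ?B" "finite ?C" "finite ?D" "finite ?E" using finite_Pq by auto
  have "(\<Prod>k\<in>Kq q. f k) = (\<Prod>k\<in>?A \<union> ?B \<union> ?C \<union> ?D \<union> ?E. f k)" unfolding Kq_def ..
  also have "\<dots> = (\<Prod>k\<in>?A \<union> ?B \<union> ?C \<union> ?D. f k) * (\<Prod>k\<in>?E. f k)"
    by (rule prod.union_disjoint, insert fin, auto)
  also have "(\<Prod>k\<in>?A \<union> ?B \<union> ?C \<union> ?D. f k) = (\<Prod>k\<in>?A \<union> ?B \<union> ?C. f k) * (\<Prod>k\<in>?D. f k)"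
    by (rule prod.union_disjoint, insert fin, auto)
  also have "(\<Prod>k\<in>?A \<union> ?B \<union> ?C. f k) = (\<Prod>k\<in>?A \<union> ?B. f k) * (\<Prod>k\<in>?C. f k)"
    by (rule prod.union_disjoint, insert fin, auto)
  also have "(\<Prod>k\<in>?A \<union> ?B. f k) = (\<Prod>k\<in>?A. f k) * (\<Prod>k\<in>?B. f k)"
    by (rule prod.union_disjoint, insert fin, auto)
  also have "(\<Prod>k\<in>?A. f k) = f LF0 * f LF1" by simp
  also have "(\<Prod>k\<in>?B. f k) = (\<Prod>c\<in>{2..q}. f (LM1 c))" by (subst prod.reindex, auto simp: inj_on_def)
  also have "(\<Prod>k\<in>?C. f k) = (\<Prod>c\<in>{2..q}. f (LM2 c))" by (subst prod.reindex, auto simp: inj_on_def)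
  also have "(\<Prod>k\<in>?D. f k) = (\<Prod>p\<in>Pq q. f (LTA (fst p) (snd p)))" 
    by (subst prod.reindex, auto simp: inj_on_def intro!: prod.cong)
  also have "(\<Prod>k\<in>?E. f k) = (\<Prod>p\<in>Pq q. f (LTB (fst p) (snd p)))" 
    by (subst prod.reindex, auto simp: inj_on_def intro!: prod.cong)
  finally show ?thesis .
qed

definition Lt :: "nat \<Rightarrow> (nat \<times> nat) set" where "Lt q = {(a,b). 2 \<le> a \<and> a < b \<and> b \<le> q}"

lemma card_Lt: "2 * card (Lt q) = (q - 1) * (q - 2)"
proof -
  let ?S = "{2..q} \<times> {2..q}"
  let ?D = "(\<lambda>a. (a,a)) ` {2..q}"
  have fL: "finite (Lt q)" by (rule finite_subset[of _ "{0..q} \<times> {0..q}"], auto simp: Lt_def)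
  have e: "?S = (Lt q \<union> prod.swap ` Lt q) \<union> ?D" by (auto simp: Lt_def)
  have "card ?S = card (Lt q \<union> prod.swap ` Lt q) + card ?D"
    unfolding e by (rule card_Un_disjoint, insert fL, auto simp: Lt_def)
  also have "card (Lt q \<union> prod.swap ` Lt q) = card (Lt q) + card (prod.swap ` Lt q)"
    by (rule card_Un_disjoint, insert fL, auto simp: Lt_def)
  also have "card (prod.swap ` Lt q) = card (Lt q)" by (rule card_image, auto simp: inj_on_def)
  also have "card ?D = q - 1" by (subst card_image, auto simp: inj_on_def)
  finally have "(q - 1) * (q - 1) = 2 * card (Lt q) + (q - 1)" by simp
  hence "2 * card (Lt q) = (q - 1) * (q - 1) - (q - 1)" by simp
  also have "\<dots> = (q - 1) * (q - 2)" by (cases q, simp, cases "q - 1", auto simp: algebra_simps)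
  finally show ?thesis .
qed

lemma prod_Pq: "(\<Prod>p\<in>Pq q. (if fst p < snd p then (A :: 'a :: comm_monoid_mult) else B)) = A ^ card (Lt q) * B ^ (q - 1)"
proof -
  have "(\<Prod>p\<in>Pq q. (if fst p < snd p then A else B)) = 
    (\<Prod>p\<in>Pq q \<inter> {p. fst p < snd p}. A) * (\<Prod>p\<in>Pq q \<inter> - {p. fst p < snd p}. B)"
    by (rule prod.If_cases[OF finite_Pq])
  also have "Pq q \<inter> {p. fst p < snd p} = Lt q" by (auto simp: Pq_def Lt_def)
  also have "Pq q \<inter> - {p. fst p < snd p} = (\<lambda>a. (a,a)) ` {2..q}" by (auto simp: Pq_def)
  also have "(\<Prod>p\<in>Lt q. A) * (\<Prod>p\<in>(\<lambda>a. (a,a)) ` {2..q}. B) = A ^ card (Lt q) * B ^ card ((\<lambda>a. (a,a)) ` {2..q})"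
    by simp
  also have "card ((\<lambda>a. (a,a)) ` {2..q}) = q - 1" by (subst card_image, auto simp: inj_on_def)
  finally show ?thesis .
qed

lemma V_TAd: "2 \<le> a \<Longrightarrow> dt {GA a a} (Em q) = [:-1, 1:]" using V_TA[of a a q] by simp
lemma V_TBd: "2 \<le> a \<Longrightarrow> dt {GB a a} (Em q) = [:-1, 1:]" using V_TB[of a a q] by simp

lemma dt_E_val: assumes q: "q \<ge> 2"
  shows "dt (Gs q) (Em q) = [:1, - ((of_nat q)^2 - 4 * of_nat q + 2), 1:] * [:-1, 1:]^2
    * [:1, of_nat q - 2, 1:] ^ (q - 1) * [:1, - (of_nat q - 2), 1:] ^ (q - 1)
    * ([:-1, 0, 1:] ^ card (Lt q) * [:-1, 1:] ^ (q - 1)) * ([:-1, 0, 1:] ^ card (Lt q) * [:-1, 1:] ^ (q - 1))"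
proof -
  let ?V = "\<lambda>k. dt {i\<in>Gs q. lab i = k} (Em q)"
  have q1: "q \<ge> 1" using q by simp
  have m1: "(\<Prod>c\<in>{2..q}. ?V (LM1 c)) = [:1, of_nat q - 2, 1:] ^ (q - 1)"
  proof -
    have "(\<Prod>c\<in>{2..q}. ?V (LM1 c)) = (\<Prod>c\<in>{2..q}. [:1, of_nat q - 2, 1:])"
      by (rule prod.cong, auto simp: fib_M1 V_M1)
    thus ?thesis by simp
  qed
  have m2: "(\<Prod>c\<in>{2..q}. ?V (LM2 c)) = [:1, - (of_nat q - 2), 1:] ^ (q - 1)"
  proof -
    have "(\<Prod>c\<in>{2..q}. ?V (LM2 c)) = (\<Prod>c\<in>{2..q}. [:1, - (of_nat q - 2), 1:])"
      by (rule prod.cong, auto simp: fib_M2 V_M2)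
    thus ?thesis by simp
  qed
  have ta: "(\<Prod>p\<in>Pq q. ?V (LTA (fst p) (snd p))) = [:-1, 0, 1:] ^ card (Lt q) * [:-1, 1:] ^ (q - 1)"
  proof -
    have "(\<Prod>p\<in>Pq q. ?V (LTA (fst p) (snd p))) = (\<Prod>p\<in>Pq q. (if fst p < snd p then [:-1, 0, 1:] else [:-1, 1:]))"
      by (rule prod.cong, auto simp: Pq_def fib_TA V_TA V_TAd)
    thus ?thesis by (simp add: prod_Pq)
  qed
  have tb: "(\<Prod>p\<in>Pq q. ?V (LTB (fst p) (snd p))) = [:-1, 0, 1:] ^ card (Lt q) * [:-1, 1:] ^ (q - 1)"
  proof -
    have "(\<Prod>p\<in>Pq q. ?V (LTB (fst p) (snd p))) = (\<Prod>p\<in>Pq q. (if fst p < snd p then [:-1, 0, 1:] else [:-1, 1:]))"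
      by (rule prod.cong, auto simp: Pq_def fib_TB V_TB V_TBd)
    thus ?thesis by (simp add: prod_Pq)
  qed
  show ?thesis unfolding dt_E_prod prod_Kq m1 m2 ta tb fib_F0[OF q1] fib_F1 V_F0 V_F1 ..
qed


lemma cp_dt: assumes q: "q \<ge> 2"
  shows "char_poly (map_mat (of_int :: int \<Rightarrow> rat) (KZ_mat q)) = dt (Gs q) (Cm q)"
proof -
  let ?n = "2 * q^2 + 2"
  have b: "bij_betw (gen_of q) {0..<?n} (Gs q)" by (rule gen_of_bij, insert q, simp)
  have inj: "\<And>i j. i < ?n \<Longrightarrow> j < ?n \<Longrightarrow> gen_of q i = gen_of q j \<longleftrightarrow> i = j"
    using b unfolding bij_betw_def inj_on_def by auto
  have "dt (Gs q) (Cm q) = det (mat ?n ?n (\<lambda>(i,j). Cm q (gen_of q i) (gen_of q j)))"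
    by (rule dt_bij[OF finite_Gs b])
  also have "mat ?n ?n (\<lambda>(i,j). Cm q (gen_of q i) (gen_of q j)) = char_poly_matrix (map_mat of_int (KZ_mat q))"
    by (rule eq_matI, auto simp: char_poly_matrix_def KZ_mat_def Cm_def inj)
  finally show ?thesis unfolding char_poly_def by simp
qed

lemma target_rat: "of_int_poly (let P = [:1, - (int q^2 - 4 * int q + 2), 1:];
         Q = [:1, 0, 1:]^2 - [:0, 0, (int q - 2)^2:]
     in P * Q ^ (q - 1) * [:-1, 1:] ^ (q^2 + 2 - q) * [:1, 1:] ^ (q^2 + 2 - 3 * q))
  = [:1, - ((of_nat q :: rat)^2 - 4 * of_nat q + 2), 1:] * ([:1, 0, 1:]^2 - [:0, 0, (of_nat q - 2)^2:]) ^ (q - 1)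
     * [:-1, 1:] ^ (q^2 + 2 - q) * [:1, 1:] ^ (q^2 + 2 - 3 * q :: nat)"
  by (simp only: Let_def of_int_poly_hom.hom_mult of_int_poly_hom.hom_power of_int_poly_hom.hom_minus of_int_hom.map_poly_pCons_hom, simp)


lemma polyQ: "[:1, 0, 1:]^2 - [:0, 0, (x - 2)^2:] = [:1, x - 2, 1:] * [:1, - (x - 2), 1::rat:]"
  by (simp add: power2_eq_square algebra_simps)

lemma polyAB: "[:-1, 0, 1::rat:] = [:-1, 1:] * [:1, 1:]"
  by simp

lemma regroup: fixes Pr a b c M1 M2 QQ :: "'a :: comm_monoid_mult"
  assumes "QQ = M1 * M2" "c = a * b" "e1 = 2 + 2 * m + 2 * n" "e2 = 2 * m"
  shows "Pr * a^2 * M1^n * M2^n * (c^m * a^n) * (c^m * a^n) = Pr * QQ^n * a^e1 * b^e2"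
proof -
  have "e1 = 2 + m + m + n + n" "e2 = m + m" using assms(3,4) by auto
  thus ?thesis using assms(1,2) by (simp only: power_add power_mult_distrib ac_simps)
qed

theorem proposition6p2:
  fixes q :: nat
  assumes "q \<ge> 2"
  shows "char_poly (KZ_mat q) =
    (let P = [:1, - (int q^2 - 4 * int q + 2), 1:];
         Q = [:1, 0, 1:]^2 - [:0, 0, (int q - 2)^2:]
     in P * Q ^ (q - 1) * [:-1, 1:] ^ (q^2 + 2 - q) * [:1, 1:] ^ (q^2 + 2 - 3 * q))"
proof -
  have carr: "KZ_mat q \<in> carrier_mat (2 * q^2 + 2) (2 * q^2 + 2)" by (simp add: KZ_mat_def)
  have m: "2 * card (Lt q) = (q - 1) * (q - 2)" by (rule card_Lt)
  have e1: "q^2 + 2 - q = 2 + 2 * card (Lt q) + 2 * (q - 1)"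
  proof -
    obtain k where k: "q = k + 2" using assms by (metis add.commute le_Suc_ex)
    have "q^2 + 2 - q = 2 + (q - 1) * (q - 2) + 2 * (q - 1)" unfolding k by (simp add: power2_eq_square algebra_simps)
    thus ?thesis using m by simp
  qed
  have e2: "q^2 + 2 - 3 * q = 2 * card (Lt q)"
  proof -
    obtain k where k: "q = k + 2" using assms by (metis add.commute le_Suc_ex)
    have "q^2 + 2 - 3 * q = (q - 1) * (q - 2)" unfolding k by (simp add: power2_eq_square algebra_simps)
    thus ?thesis using m by simp
  qed
  have "of_int_poly (char_poly (KZ_mat q)) = char_poly (map_mat (of_int :: int \<Rightarrow> rat) (KZ_mat q))"
    by (rule of_int_hom.char_poly_hom[OF carr, symmetric])
  also have "\<dots> = dt (Gs q) (Em q)" using cp_dt[OF assms] dt_C_E[OF assms] by simp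
  also have "\<dots> = of_int_poly (let P = [:1, - (int q^2 - 4 * int q + 2), 1:];
         Q = [:1, 0, 1:]^2 - [:0, 0, (int q - 2)^2:]
     in P * Q ^ (q - 1) * [:-1, 1:] ^ (q^2 + 2 - q) * [:1, 1:] ^ (q^2 + 2 - 3 * q))"
    unfolding dt_E_val[OF assms] target_rat
    by (rule regroup[OF polyQ polyAB e1 e2])
  finally show ?thesis by (rule of_int_poly_hom.injectivity)
qed


end
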